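(* Let $n_1\ge1$, $n_2\ge1$ with $n_1+n_2\ge3$. Let $\mathcal L$ be the real Lie algebra generated by all block diagonal matrices $\begin{pmatrix}A&0\\0&B\end{pmatrix}$ with $A\in su(n_1)$, $B\in su(n_2)$ arbitrary, together with a single matrix which has entries $i$ in positions $(j,m)$ and $(m,j)$ and zeros elsewhere, for some fixed $1\le j\le n_1$ and $n_1+1\le m\le n_1+n_2$. Then $\mathcal L=su(n_1+n_2)$. *)

theory Defs
  imports Complex_Main "Jordan_Normal_Form.Matrix"
begin

definition mtrace :: "'a::comm_ring_1 mat \<Rightarrow> 'a" where
  "mtrace A = (\<Sum>i<dim_row A. A $$ (i,i))"

definition su :: "nat \<Rightarrow> complex mat set" where
  "su n = {A \<in> carrier_mat n n.
             (\<forall>i<n. \<forall>k<n. A $$ (k,i) = - cnj (A $$ (i,k))) \<and> mtrace A = 0}"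

definition lie_bracket :: "complex mat \<Rightarrow> complex mat \<Rightarrow> complex mat" where
  "lie_bracket X Y = X * Y - Y * X"

inductive_set real_lie_gen :: "nat \<Rightarrow> complex mat set \<Rightarrow> complex mat set"
  for n :: nat and S :: "complex mat set" where
  gen: "X \<in> S \<Longrightarrow> X \<in> real_lie_gen n S"
| zero: "0\<^sub>m n n \<in> real_lie_gen n S"
| add: "X \<in> real_lie_gen n S \<Longrightarrow> Y \<in> real_lie_gen n S \<Longrightarrow> X + Y \<in> real_lie_gen n S"
| smult: "X \<in> real_lie_gen n S \<Longrightarrow> complex_of_real r \<cdot>\<^sub>m X \<in> real_lie_gen n S"
| bracket: "X \<in> real_lie_gen n S \<Longrightarrow> Y \<in> real_lie_gen n S \<Longrightarrow> lie_bracket X Y \<in> real_lie_gen n S"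

definition block_diag :: "complex mat \<Rightarrow> complex mat \<Rightarrow> complex mat" where
  "block_diag A B = four_block_mat A (0\<^sub>m (dim_row A) (dim_col B)) (0\<^sub>m (dim_row B) (dim_col A)) B"

text \<open>The n x n matrix with entries i at positions (j,m) and (m,j) and 0 elsewhere (0-based indices).\<close>
definition sym_i_mat :: "nat \<Rightarrow> nat \<Rightarrow> nat \<Rightarrow> complex mat" where
  "sym_i_mat n j m = mat n n (\<lambda>(a,b). if (a = j \<and> b = m) \<or> (a = m \<and> b = j) then \<i> else 0)"

end

theory Submission
  imports Defs
begin
definition E :: "nat \<Rightarrow> nat \<Rightarrow> nat \<Rightarrow> complex mat" where
  "E n a b = mat n n (\<lambda>(r,s). if r = a \<and> s = b then 1 else 0)"
lemma E_carrier[simp]: "E n a b \<in> carrier_mat n n" by (simp add: E_def)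
lemma E_dims[simp]: "dim_row (E n a b) = n" "dim_col (E n a b) = n" by (simp_all add: E_def)
lemma E_index[simp]: "r < n \<Longrightarrow> s < n \<Longrightarrow> E n a b $$ (r,s) = (if r = a \<and> s = b then 1 else 0)"
  by (simp add: E_def)
lemma E_mult: assumes "b < n" shows "E n a b * E n c d = (if b = c then E n a d else 0\<^sub>m n n)"
proof (rule eq_matI)
  fix r s assume rs: "r < dim_row (if b = c then E n a d else 0\<^sub>m n n)" "s < dim_col (if b = c then E n a d else 0\<^sub>m n n)"
  then have r: "r < n" "s < n" by (auto split: if_splits)
  have "(E n a b * E n c d) $$ (r,s) = (\<Sum>k<n. (if r = a \<and> k = b then 1 else 0) * (if k = c \<and> s = d then 1 else 0))"
    using r by (simp add: scalar_prod_def lessThan_atLeast0)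
  also have "\<dots> = (\<Sum>k<n. if k = b then (if r = a \<and> b = c \<and> s = d then 1 else 0) else 0)"
    by (rule sum.cong) auto
  also have "\<dots> = (if b = c then E n a d else 0\<^sub>m n n) $$ (r,s)" using r assms by auto
  finally show "(E n a b * E n c d) $$ (r,s) = (if b = c then E n a d else 0\<^sub>m n n) $$ (r,s)" .
qed auto

definition Xm where "Xm n a b = E n a b - E n b a"
definition Ym where "Ym n a b = \<i> \<cdot>\<^sub>m (E n a b + E n b a)"
definition Dm where "Dm n a b = \<i> \<cdot>\<^sub>m (E n a a - E n b b)"
lemma [simp]: "Xm n a b \<in> carrier_mat n n" "Ym n a b \<in> carrier_mat n n" "Dm n a b \<in> carrier_mat n n"
  by (auto simp: Xm_def Ym_def Dm_def)

lemma dm1: "dim_row A = dim_row B \<Longrightarrow> dim_col A = dim_col B \<Longrightarrow> dim_col A = dim_row C \<Longrightarrow> (A - B) * C = A * C - (B * C :: complex mat)"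
  by (rule minus_mult_distrib_mat[of A "dim_row A" "dim_col A" B C "dim_col C"]) (metis carrier_matI)+
lemma dm3: "dim_row A = dim_row B \<Longrightarrow> dim_col A = dim_col B \<Longrightarrow> dim_col A = dim_row C \<Longrightarrow> (A + B) * C = A * C + (B * C :: complex mat)"
  by (rule add_mult_distrib_mat[of A "dim_row A" "dim_col A" B C "dim_col C"]) (metis carrier_matI)+
lemma dm2: "dim_row B = dim_row C \<Longrightarrow> dim_col B = dim_col C \<Longrightarrow> dim_col A = dim_row B \<Longrightarrow> A * (B - C) = A * B - (A * C :: complex mat)"
  by (rule mult_minus_distrib_mat[of A "dim_row A" "dim_col A" B "dim_col C" C]) (metis carrier_matI)+
lemma dm4: "dim_row B = dim_row C \<Longrightarrow> dim_col B = dim_col C \<Longrightarrow> dim_col A = dim_row B \<Longrightarrow> A * (B + C) = A * B + (A * C :: complex mat)"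
  by (rule mult_add_distrib_mat[of A "dim_row A" "dim_col A" B "dim_col C" C]) (metis carrier_matI)+
lemma dm5: "dim_col A = dim_row B \<Longrightarrow> A * (k \<cdot>\<^sub>m B) = k \<cdot>\<^sub>m (A * (B :: complex mat))"
  by (rule mult_smult_distrib[of A "dim_row A" "dim_col A" B "dim_col B"]) (metis carrier_matI)+
lemma dm6: "dim_col A = dim_row B \<Longrightarrow> (k \<cdot>\<^sub>m A) * B = k \<cdot>\<^sub>m (A * (B :: complex mat))"
  by (rule mult_smult_assoc_mat[of A "dim_row A" "dim_col A" B "dim_col B"]) (metis carrier_matI)+
lemmas dms = dm1 dm2 dm3 dm4 dm5 dm6

lemma B1: assumes "a < n" "b < n" "c < n" "a \<noteq> b" "b \<noteq> c" "a \<noteq> c"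
  shows "lie_bracket (Xm n a b) (Ym n b c) = Ym n a c"
  unfolding lie_bracket_def Xm_def Ym_def
  using assms apply (simp add: dms E_mult)
  apply (rule eq_matI) apply auto
  done

lemma B2: assumes "a < n" "b < n" "c < n" "a \<noteq> b" "b \<noteq> c" "a \<noteq> c"
  shows "lie_bracket (Ym n a b) (Ym n b c) = complex_of_real (-1) \<cdot>\<^sub>m Xm n a c"
  unfolding lie_bracket_def Xm_def Ym_def
  using assms apply (simp add: dms E_mult)
  apply (rule eq_matI) apply auto
  done

lemma B3: assumes "a < n" "b < n" "a \<noteq> b"
  shows "lie_bracket (Xm n a b) (Ym n a b) = complex_of_real 2 \<cdot>\<^sub>m Dm n a b"
  unfolding lie_bracket_def Xm_def Ym_def Dm_def
  using assms apply (simp add: dms E_mult)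
  apply (rule eq_matI) apply auto
  done

lemma Ym_sym: "Ym n a b = Ym n b a"
  unfolding Ym_def by (subst comm_add_mat[of _ n n]) auto

lemma Xm_index: "r < n \<Longrightarrow> s < n \<Longrightarrow> Xm n a b $$ (r,s) = (if r = a \<and> s = b then 1 else 0) - (if r = b \<and> s = a then 1 else 0)"
  by (simp add: Xm_def)
lemma Ym_index: "r < n \<Longrightarrow> s < n \<Longrightarrow> Ym n a b $$ (r,s) = \<i> * ((if r = a \<and> s = b then 1 else 0) + (if r = b \<and> s = a then 1 else 0))"
  by (simp add: Ym_def)
lemma Dm_index: "r < n \<Longrightarrow> s < n \<Longrightarrow> Dm n a b $$ (r,s) = \<i> * ((if r = a \<and> s = a then 1 else 0) - (if r = b \<and> s = b then 1 else 0))"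
  by (simp add: Dm_def)
lemma Xm_dims[simp]: "dim_row (Xm n a b) = n" "dim_col (Xm n a b) = n" by (simp_all add: Xm_def)
lemma Ym_dims[simp]: "dim_row (Ym n a b) = n" "dim_col (Ym n a b) = n" by (simp_all add: Ym_def)
lemma Dm_dims[simp]: "dim_row (Dm n a b) = n" "dim_col (Dm n a b) = n" by (simp_all add: Dm_def)

lemma mult_index: "A \<in> carrier_mat n n \<Longrightarrow> B \<in> carrier_mat n n \<Longrightarrow> i < n \<Longrightarrow> k < n \<Longrightarrow>
  (A * B) $$ (i,k) = (\<Sum>l<n. A $$ (i,l) * B $$ (l,k))"
  by (simp add: scalar_prod_def lessThan_atLeast0)

lemma mtrace_comm: assumes "A \<in> carrier_mat n n" "B \<in> carrier_mat n n"
  shows "mtrace (A * B) = mtrace (B * A)"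
proof -
  have "mtrace (A * B) = (\<Sum>i<n. \<Sum>l<n. A $$ (i,l) * B $$ (l,i))"
    using assms unfolding mtrace_def by (auto intro!: sum.cong simp: mult_index carrier_matD index_mult_mat(2,3) simp del: index_mult_mat(1))
  also have "\<dots> = (\<Sum>l<n. \<Sum>i<n. B $$ (l,i) * A $$ (i,l))"
    by (subst sum.swap) (simp add: mult.commute)
  also have "\<dots> = mtrace (B * A)"
    using assms unfolding mtrace_def by (auto intro!: sum.cong simp: mult_index carrier_matD index_mult_mat(2,3) simp del: index_mult_mat(1))
  finally show ?thesis .
qed

lemma su_zero: "0\<^sub>m n n \<in> su n"
  by (simp add: su_def mtrace_def)

lemma suD: assumes "A \<in> su n"
  shows "A \<in> carrier_mat n n" "\<And>i k. i < n \<Longrightarrow> k < n \<Longrightarrow> A $$ (k,i) = - cnj (A $$ (i,k))" "mtrace A = 0"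
  using assms unfolding su_def by blast+

lemma suI: assumes "A \<in> carrier_mat n n" "\<And>i k. i < n \<Longrightarrow> k < n \<Longrightarrow> A $$ (k,i) = - cnj (A $$ (i,k))" "mtrace A = 0"
  shows "A \<in> su n"
  using assms unfolding su_def by blast

lemma su_add: assumes "A \<in> su n" "B \<in> su n" shows "A + B \<in> su n"
proof (rule suI)
  note c = suD(1)[OF assms(1)] suD(1)[OF assms(2)]
  show "A + B \<in> carrier_mat n n" using c by simp
  show "(A + B) $$ (k,i) = - cnj ((A + B) $$ (i,k))" if "i < n" "k < n" for i k
    using c that suD(2)[OF assms(1) that] suD(2)[OF assms(2) that] by simp
  have "mtrace (A + B) = mtrace A + mtrace B"
    using c by (simp add: mtrace_def sum.distrib)
  then show "mtrace (A + B) = 0" using suD(3)[OF assms(1)] suD(3)[OF assms(2)] by simp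
qed

lemma su_smult: assumes "A \<in> su n" shows "complex_of_real r \<cdot>\<^sub>m A \<in> su n"
proof (rule suI)
  note c = suD(1)[OF assms(1)]
  show "complex_of_real r \<cdot>\<^sub>m A \<in> carrier_mat n n" using c by simp
  show "(complex_of_real r \<cdot>\<^sub>m A) $$ (k,i) = - cnj ((complex_of_real r \<cdot>\<^sub>m A) $$ (i,k))" if "i < n" "k < n" for i k
    using c that suD(2)[OF assms(1) that] by simp
  have "mtrace (complex_of_real r \<cdot>\<^sub>m A) = complex_of_real r * mtrace A"
    using c by (simp add: mtrace_def sum_distrib_left)
  then show "mtrace (complex_of_real r \<cdot>\<^sub>m A) = 0" using suD(3)[OF assms(1)] by simp
qed

lemma su_bracket: assumes "A \<in> su n" "B \<in> su n" shows "lie_bracket A B \<in> su n"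
proof -
  note c = suD(1)[OF assms(1)] suD(1)[OF assms(2)]
  note sA = suD(2)[OF assms(1)] and sB = suD(2)[OF assms(2)]
  have tr: "mtrace (lie_bracket A B) = 0"
  proof -
    have "mtrace (lie_bracket A B) = mtrace (A * B) - mtrace (B * A)"
      using c by (simp add: mtrace_def lie_bracket_def sum_subtractf)
    then show ?thesis using mtrace_comm[OF c] by simp
  qed
  have sk: "lie_bracket A B $$ (k,i) = - cnj (lie_bracket A B $$ (i,k))" if "i < n" "k < n" for i k
  proof -
    have "lie_bracket A B $$ (k,i) = (\<Sum>l<n. A $$ (k,l) * B $$ (l,i)) - (\<Sum>l<n. B $$ (k,l) * A $$ (l,i))"
      using c that by (simp add: lie_bracket_def mult_index index_mult_mat(2,3) del: index_mult_mat(1))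
    also have "\<dots> = (\<Sum>l<n. cnj (B $$ (i,l) * A $$ (l,k))) - (\<Sum>l<n. cnj (A $$ (i,l) * B $$ (l,k)))"
      using that by (intro arg_cong2[where f="(-)"] sum.cong refl) (simp_all add: sA[of _ k] sB[of i] sA[of i] sB[of _ k] mult.commute)
    also have "\<dots> = - cnj (lie_bracket A B $$ (i,k))"
      using c that by (simp add: lie_bracket_def mult_index index_mult_mat(2,3) del: index_mult_mat(1))
    finally show ?thesis .
  qed
  have "lie_bracket A B \<in> carrier_mat n n" unfolding lie_bracket_def by (rule minus_carrier_mat) (rule mult_carrier_mat[OF c(2) c(1)])
  then show ?thesis using tr sk by (intro suI)
qed

lemma sum_split_add: "(\<Sum>k<a+(b::nat). f k) = (\<Sum>k<a. f k) + (\<Sum>k<b. f (a+k))"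
  by (induction b) (simp_all add: ac_simps)

lemma block_diag_su: assumes "A \<in> su n1" "B \<in> su n2" shows "block_diag A B \<in> su (n1+n2)"
proof (rule suI)
  note cA = suD(1)[OF assms(1)] and cB = suD(1)[OF assms(2)]
  have d: "dim_row A = n1" "dim_col A = n1" "dim_row B = n2" "dim_col B = n2" using cA cB by auto
  show "block_diag A B \<in> carrier_mat (n1+n2) (n1+n2)"
    unfolding block_diag_def by (rule four_block_carrier_mat[OF cA cB])
  show "block_diag A B $$ (k,i) = - cnj (block_diag A B $$ (i,k))" if "i < n1+n2" "k < n1+n2" for i k
  proof (cases "i < n1"; cases "k < n1")
    assume "i < n1" "k < n1" then show ?thesis using that
      by (simp add: block_diag_def d suD(2)[OF assms(1), of i k])
  next
    assume "\<not> i < n1" "\<not> k < n1" then show ?thesis using that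
      by (simp add: block_diag_def d suD(2)[OF assms(2), of "i-n1" "k-n1"])
  qed (use that in \<open>simp_all add: block_diag_def d\<close>)
  have "mtrace (block_diag A B) = (\<Sum>i<n1. A $$ (i,i)) + (\<Sum>i<n2. B $$ (i,i))"
    unfolding mtrace_def by (simp add: block_diag_def d sum_split_add)
  also have "\<dots> = 0" using suD(3)[OF assms(1)] suD(3)[OF assms(2)] d by (simp add: mtrace_def)
  finally show "mtrace (block_diag A B) = 0" .
qed

lemma sym_i_su: assumes "j \<noteq> m" "j < n" "m < n" shows "sym_i_mat n j m \<in> su n"
proof (rule suI)
  show "sym_i_mat n j m \<in> carrier_mat n n" by (simp add: sym_i_mat_def)
  show "sym_i_mat n j m $$ (k,i) = - cnj (sym_i_mat n j m $$ (i,k))" if "i < n" "k < n" for i k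
    using that by (auto simp: sym_i_mat_def)
  show "mtrace (sym_i_mat n j m) = 0"
    unfolding mtrace_def by (rule sum.neutral) (use assms in \<open>auto simp: sym_i_mat_def\<close>)
qed

lemma L_su: "X \<in> real_lie_gen n S \<Longrightarrow> S \<subseteq> su n \<Longrightarrow> X \<in> su n"
  by (induction rule: real_lie_gen.induct) (auto intro: su_zero su_add su_smult su_bracket)

lemma blk1: assumes "F \<in> carrier_mat (n1+n2) (n1+n2)"
  "\<And>r s. r < n1+n2 \<Longrightarrow> s < n1+n2 \<Longrightarrow> \<not> (r < n1 \<and> s < n1) \<Longrightarrow> F $$ (r,s) = 0"
  "mat n1 n1 (($$) F) \<in> su n1"
  shows "F \<in> {block_diag A B | A B. A \<in> su n1 \<and> B \<in> su n2}"
proof -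
  have "F = block_diag (mat n1 n1 (($$) F)) (0\<^sub>m n2 n2)"
    by (rule eq_matI) (use assms in \<open>auto simp: block_diag_def\<close>)
  then show ?thesis using assms(3) su_zero by blast
qed

lemma blk2: assumes "F \<in> carrier_mat (n1+n2) (n1+n2)"
  "\<And>r s. r < n1+n2 \<Longrightarrow> s < n1+n2 \<Longrightarrow> \<not> (n1 \<le> r \<and> n1 \<le> s) \<Longrightarrow> F $$ (r,s) = 0"
  "mat n2 n2 (\<lambda>(r,s). F $$ (n1+r,n1+s)) \<in> su n2"
  shows "F \<in> {block_diag A B | A B. A \<in> su n1 \<and> B \<in> su n2}"
proof -
  have "F = block_diag (0\<^sub>m n1 n1) (mat n2 n2 (\<lambda>(r,s). F $$ (n1+r,n1+s)))"
    by (rule eq_matI) (use assms in \<open>auto simp: block_diag_def\<close>)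
  then show ?thesis using assms(3) su_zero by blast
qed

lemma Xm_su: assumes "p < k" "q < k" "p \<noteq> q" shows "Xm k p q \<in> su k"
proof (rule suI)
  show "Xm k p q \<in> carrier_mat k k" by simp
  show "Xm k p q $$ (b,a) = - cnj (Xm k p q $$ (a,b))" if "a < k" "b < k" for a b
    using that by (cases "a=p"; cases "b=q"; cases "a=q"; cases "b=p") (simp_all add: Xm_index)
  show "mtrace (Xm k p q) = 0"
  proof (unfold mtrace_def Xm_dims Ym_dims, rule sum.neutral, rule ballI)
    fix x assume "x \<in> {..<k}"
    then show "Xm k p q $$ (x,x) = 0" using assms by (cases "x=p"; cases "x=q") (simp_all add: Xm_index)
  qed
qed

lemma Ym_su: assumes "p < k" "q < k" "p \<noteq> q" shows "Ym k p q \<in> su k"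
proof (rule suI)
  show "Ym k p q \<in> carrier_mat k k" by simp
  show "Ym k p q $$ (b,a) = - cnj (Ym k p q $$ (a,b))" if "a < k" "b < k" for a b
    using that by (cases "a=p"; cases "b=q"; cases "a=q"; cases "b=p") (simp_all add: Ym_index)
  show "mtrace (Ym k p q) = 0"
  proof (unfold mtrace_def Xm_dims Ym_dims, rule sum.neutral, rule ballI)
    fix x assume "x \<in> {..<k}"
    then show "Ym k p q $$ (x,x) = 0" using assms by (cases "x=p"; cases "x=q") (simp_all add: Ym_index)
  qed
qed

lemma Xm_res1: assumes "n1 \<le> n" shows "mat n1 n1 (($$) (Xm n p q)) = Xm n1 p q"
proof (rule eq_matI)
  fix i k assume "i < dim_row (Xm n1 p q)" "k < dim_col (Xm n1 p q)"
  then have ik: "i < n1" "k < n1" by simp_all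
  show "mat n1 n1 (($$) (Xm n p q)) $$ (i,k) = Xm n1 p q $$ (i,k)"
  proof -
    have "mat n1 n1 (($$) (Xm n p q)) $$ (i,k) = Xm n p q $$ (i, k)"
      using ik by simp
    also have "\<dots> = (if i = p \<and> k = q then 1 else 0) - (if i = q \<and> k = p then 1 else 0)"
      using ik assms by (intro Xm_index) simp_all
    also have "\<dots> = Xm n1 p q $$ (i,k)"
      using ik by (intro Xm_index[symmetric])
    finally show ?thesis .
  qed
qed auto
lemma Ym_res1: assumes "n1 \<le> n" shows "mat n1 n1 (($$) (Ym n p q)) = Ym n1 p q"
proof (rule eq_matI)
  fix i k assume "i < dim_row (Ym n1 p q)" "k < dim_col (Ym n1 p q)"
  then have ik: "i < n1" "k < n1" by simp_all
  show "mat n1 n1 (($$) (Ym n p q)) $$ (i,k) = Ym n1 p q $$ (i,k)"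
  proof -
    have "mat n1 n1 (($$) (Ym n p q)) $$ (i,k) = Ym n p q $$ (i, k)"
      using ik by simp
    also have "\<dots> = \<i> * ((if i = p \<and> k = q then 1 else 0) + (if i = q \<and> k = p then 1 else 0))"
      using ik assms by (intro Ym_index) simp_all
    also have "\<dots> = Ym n1 p q $$ (i,k)"
      using ik by (intro Ym_index[symmetric])
    finally show ?thesis .
  qed
qed auto
lemma Xm_res2: assumes "n1 \<le> p" "n1 \<le> q" shows "mat n2 n2 (\<lambda>(r,s). Xm (n1+n2) p q $$ (n1+r,n1+s)) = Xm n2 (p-n1) (q-n1)"
proof (rule eq_matI)
  fix i k assume "i < dim_row (Xm n2 (p-n1) (q-n1))" "k < dim_col (Xm n2 (p-n1) (q-n1))"
  then have ik: "i < n2" "k < n2" by simp_all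
  have e: "(n1 + i = p) = (i = p - n1)" "(n1 + k = q) = (k = q - n1)" "(n1 + i = q) = (i = q - n1)" "(n1 + k = p) = (k = p - n1)"
    using assms by arith+
  show "mat n2 n2 (\<lambda>(r,s). Xm (n1+n2) p q $$ (n1+r,n1+s)) $$ (i,k) = Xm n2 (p-n1) (q-n1) $$ (i,k)"
  proof -
    have "mat n2 n2 (\<lambda>(r,s). Xm (n1+n2) p q $$ (n1+r,n1+s)) $$ (i,k) = Xm (n1+n2) p q $$ (n1+i, n1+k)"
      using ik by simp
    also have "\<dots> = (if n1+i = p \<and> n1+k = q then 1 else 0) - (if n1+i = q \<and> n1+k = p then 1 else 0)"
      using ik by (intro Xm_index) simp_all
    also have "\<dots> = (if i = p - n1 \<and> k = q - n1 then 1 else 0) - (if i = q - n1 \<and> k = p - n1 then 1 else 0)"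
      unfolding e ..
    also have "\<dots> = Xm n2 (p-n1) (q-n1) $$ (i,k)"
      using ik by (intro Xm_index[symmetric])
    finally show ?thesis .
  qed
qed auto
lemma Ym_res2: assumes "n1 \<le> p" "n1 \<le> q" shows "mat n2 n2 (\<lambda>(r,s). Ym (n1+n2) p q $$ (n1+r,n1+s)) = Ym n2 (p-n1) (q-n1)"
proof (rule eq_matI)
  fix i k assume "i < dim_row (Ym n2 (p-n1) (q-n1))" "k < dim_col (Ym n2 (p-n1) (q-n1))"
  then have ik: "i < n2" "k < n2" by simp_all
  have e: "(n1 + i = p) = (i = p - n1)" "(n1 + k = q) = (k = q - n1)" "(n1 + i = q) = (i = q - n1)" "(n1 + k = p) = (k = p - n1)"
    using assms by arith+
  show "mat n2 n2 (\<lambda>(r,s). Ym (n1+n2) p q $$ (n1+r,n1+s)) $$ (i,k) = Ym n2 (p-n1) (q-n1) $$ (i,k)"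
  proof -
    have "mat n2 n2 (\<lambda>(r,s). Ym (n1+n2) p q $$ (n1+r,n1+s)) $$ (i,k) = Ym (n1+n2) p q $$ (n1+i, n1+k)"
      using ik by simp
    also have "\<dots> = \<i> * ((if n1+i = p \<and> n1+k = q then 1 else 0) + (if n1+i = q \<and> n1+k = p then 1 else 0))"
      using ik by (intro Ym_index) simp_all
    also have "\<dots> = \<i> * ((if i = p - n1 \<and> k = q - n1 then 1 else 0) + (if i = q - n1 \<and> k = p - n1 then 1 else 0))"
      unfolding e ..
    also have "\<dots> = Ym n2 (p-n1) (q-n1) $$ (i,k)"
      using ik by (intro Ym_index[symmetric])
    finally show ?thesis .
  qed
qed auto

definition BD where "BD n1 n2 = {block_diag A B | A B. A \<in> su n1 \<and> B \<in> su n2}"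

lemma Xm_blk1: "p < n1 \<Longrightarrow> q < n1 \<Longrightarrow> p \<noteq> q \<Longrightarrow> Xm (n1+n2) p q \<in> BD n1 n2"
  unfolding BD_def by (rule blk1) (auto simp: Xm_index Xm_res1 Xm_su)
lemma Ym_blk1: "p < n1 \<Longrightarrow> q < n1 \<Longrightarrow> p \<noteq> q \<Longrightarrow> Ym (n1+n2) p q \<in> BD n1 n2"
  unfolding BD_def by (rule blk1) (auto simp: Ym_index Ym_res1 Ym_su)
lemma Xm_blk2: "n1 \<le> p \<Longrightarrow> n1 \<le> q \<Longrightarrow> p < n1+n2 \<Longrightarrow> q < n1+n2 \<Longrightarrow> p \<noteq> q \<Longrightarrow> Xm (n1+n2) p q \<in> BD n1 n2"
  unfolding BD_def by (rule blk2) (auto simp: Xm_index Xm_res2 Xm_su)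
lemma Ym_blk2: "n1 \<le> p \<Longrightarrow> n1 \<le> q \<Longrightarrow> p < n1+n2 \<Longrightarrow> q < n1+n2 \<Longrightarrow> p \<noteq> q \<Longrightarrow> Ym (n1+n2) p q \<in> BD n1 n2"
  unfolding BD_def by (rule blk2) (auto simp: Ym_index Ym_res2 Ym_su)

lemma L_scaled: assumes "X \<in> real_lie_gen n S" "Y \<in> real_lie_gen n S"
  "lie_bracket X Y = complex_of_real c \<cdot>\<^sub>m Z" "c \<noteq> 0" "Z \<in> carrier_mat n n"
  shows "Z \<in> real_lie_gen n S"
proof -
  have cc: "complex_of_real (1/c) * (complex_of_real c * z) = z" for z
    using assms(4) by (simp add: mult.assoc[symmetric] of_real_mult[symmetric])
  have "Z = complex_of_real (1/c) \<cdot>\<^sub>m (complex_of_real c \<cdot>\<^sub>m Z)"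
    by (rule eq_matI) (simp_all only: index_smult_mat cc)
  also have "\<dots> = complex_of_real (1/c) \<cdot>\<^sub>m lie_bracket X Y" using assms(3) by simp
  finally have Z: "Z = complex_of_real (1/c) \<cdot>\<^sub>m lie_bracket X Y" .
  show ?thesis unfolding Z by (rule real_lie_gen.smult[OF real_lie_gen.bracket[OF assms(1,2)]])
qed

lemma sum_in_L: assumes "finite T" "\<And>t. t \<in> T \<Longrightarrow> M t \<in> real_lie_gen n S" "\<And>t. t \<in> T \<Longrightarrow> M t \<in> carrier_mat n n"
  shows "mat n n (\<lambda>(r,s). \<Sum>t\<in>T. M t $$ (r,s)) \<in> real_lie_gen n S"
  using assms
proof (induction T rule: finite_induct)
  case empty
  have "mat n n (\<lambda>(r,s). \<Sum>t\<in>{}. M t $$ (r,s)) = 0\<^sub>m n n" by (rule eq_matI) simp_all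
  then show ?case by (simp only:) (rule real_lie_gen.zero)
next
  case (insert x F)
  have cx: "M x \<in> carrier_mat n n" using insert by simp
  have "mat n n (\<lambda>(r,s). \<Sum>t\<in>insert x F. M t $$ (r,s)) = M x + mat n n (\<lambda>(r,s). \<Sum>t\<in>F. M t $$ (r,s))"
    by (rule eq_matI) (use insert(1,2) cx in simp_all)
  moreover have "M x \<in> real_lie_gen n S" using insert by simp
  moreover have "mat n n (\<lambda>(r,s). \<Sum>t\<in>F. M t $$ (r,s)) \<in> real_lie_gen n S"
    by (rule insert.IH) (use insert.prems in auto)
  ultimately show ?case by (metis real_lie_gen.add)
qed

lemma sym_eq_Ym: assumes "j \<noteq> m" shows "sym_i_mat n j m = Ym n j m"
proof (rule eq_matI)
  fix r s assume "r < dim_row (Ym n j m)" "s < dim_col (Ym n j m)"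
  then have rs: "r < n" "s < n" by simp_all
  show "sym_i_mat n j m $$ (r,s) = Ym n j m $$ (r,s)"
    using rs assms by (cases "r=j"; cases "s=m"; cases "r=m"; cases "s=j") (simp_all add: Ym_index sym_i_mat_def)
qed (simp_all add: sym_i_mat_def)

lemma main_Y: assumes "j < n1" "n1 \<le> m" "m < n1+n2" "a < n1+n2" "b < n1+n2" "a \<noteq> b"
  shows "Ym (n1+n2) a b \<in> real_lie_gen (n1+n2) (BD n1 n2 \<union> {sym_i_mat (n1+n2) j m})"
proof -
  define n where "n = n1 + n2"
  define L where "L = real_lie_gen (n1+n2) (BD n1 n2 \<union> {sym_i_mat (n1+n2) j m})"
  have gen: "X \<in> L" if "X \<in> BD n1 n2" for X using that unfolding L_def by (auto intro: real_lie_gen.gen)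
  have Yjm: "Ym n j m \<in> L" unfolding L_def n_def
    using sym_eq_Ym[of j m "n1+n2"] assms by (auto intro: real_lie_gen.gen)
  have cross: "Ym n p q \<in> L" if pq: "p < n1" "n1 \<le> q" "q < n1+n2" for p q
  proof -
    have Ypm: "Ym n p m \<in> L"
    proof (cases "p = j")
      case True then show ?thesis using Yjm by simp
    next
      case False
      have "lie_bracket (Xm n p j) (Ym n j m) = Ym n p m"
        using False assms pq unfolding n_def by (intro B1) auto
      moreover have "Xm n p j \<in> L" unfolding n_def using False assms pq by (intro gen Xm_blk1) auto
      ultimately show ?thesis using Yjm unfolding L_def by (metis real_lie_gen.bracket)
    qed
    show ?thesis
    proof (cases "q = m")
      case True then show ?thesis using Ypm by simp
    next
      case False
      have "lie_bracket (Xm n q m) (Ym n m p) = Ym n q p"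
        using False assms pq unfolding n_def by (intro B1) auto
      moreover have "Xm n q m \<in> L" unfolding n_def using False assms pq by (intro gen Xm_blk2) auto
      moreover have "Ym n m p \<in> L" using Ypm Ym_sym by metis
      ultimately have "Ym n q p \<in> L" unfolding L_def by (metis real_lie_gen.bracket)
      then show ?thesis using Ym_sym by metis
    qed
  qed
  have "Ym n a b \<in> L"
  proof (cases "a < n1"; cases "b < n1")
    assume "a < n1" "b < n1" then show ?thesis unfolding n_def using assms by (intro gen Ym_blk1) auto
  next
    assume "a < n1" "\<not> b < n1" then show ?thesis using cross assms by simp
  next
    assume "\<not> a < n1" "b < n1" then show ?thesis using cross[of b a] assms Ym_sym by (metis not_less)
  next
    assume "\<not> a < n1" "\<not> b < n1" then show ?thesis unfolding n_def using assms by (intro gen Ym_blk2) auto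
  qed
  then show ?thesis unfolding L_def n_def .
qed

lemma main_X: assumes "j < n1" "n1 \<le> m" "m < n1+n2" "n1 + n2 \<ge> 3" "a < n1+n2" "b < n1+n2" "a \<noteq> b"
  shows "Xm (n1+n2) a b \<in> real_lie_gen (n1+n2) (BD n1 n2 \<union> {sym_i_mat (n1+n2) j m})"
proof -
  define r :: nat where "r = (if 0 \<noteq> a \<and> 0 \<noteq> b then 0 else if 1 \<noteq> a \<and> 1 \<noteq> b then 1 else 2)"
  have r0: "r \<le> 2" "r \<noteq> a" "r \<noteq> b" unfolding r_def using assms(7) by auto
  then have r: "r < n1+n2" "r \<noteq> a" "r \<noteq> b" using assms(4) by linarith+
  have eq: "lie_bracket (Ym (n1+n2) a r) (Ym (n1+n2) r b) = complex_of_real (-1) \<cdot>\<^sub>m Xm (n1+n2) a b"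
    using r assms by (intro B2) auto
  have Y1: "Ym (n1+n2) a r \<in> real_lie_gen (n1+n2) (BD n1 n2 \<union> {sym_i_mat (n1+n2) j m})"
    using assms(1-3,5) r by (intro main_Y) simp_all
  have Y2: "Ym (n1+n2) r b \<in> real_lie_gen (n1+n2) (BD n1 n2 \<union> {sym_i_mat (n1+n2) j m})"
    using assms(1-3,6) r by (intro main_Y) simp_all
  show ?thesis by (rule L_scaled[OF Y1 Y2 eq]) simp_all
qed

lemma main_D: assumes "j < n1" "n1 \<le> m" "m < n1+n2" "n1 + n2 \<ge> 3" "a < n1+n2" "b < n1+n2" "a \<noteq> b"
  shows "Dm (n1+n2) a b \<in> real_lie_gen (n1+n2) (BD n1 n2 \<union> {sym_i_mat (n1+n2) j m})"
proof -
  have eq: "lie_bracket (Xm (n1+n2) a b) (Ym (n1+n2) a b) = complex_of_real 2 \<cdot>\<^sub>m Dm (n1+n2) a b"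
    using assms by (intro B3) auto
  have Y1: "Xm (n1+n2) a b \<in> real_lie_gen (n1+n2) (BD n1 n2 \<union> {sym_i_mat (n1+n2) j m})"
    using assms by (intro main_X) simp_all
  have Y2: "Ym (n1+n2) a b \<in> real_lie_gen (n1+n2) (BD n1 n2 \<union> {sym_i_mat (n1+n2) j m})"
    using assms by (intro main_Y) simp_all
  show ?thesis by (rule L_scaled[OF Y1 Y2 eq]) simp_all
qed

lemma decomp: assumes n1: "n \<ge> 1" and A: "A \<in> su n"
  and LX: "\<And>a b. a < n \<Longrightarrow> b < n \<Longrightarrow> a \<noteq> b \<Longrightarrow> Xm n a b \<in> real_lie_gen n S"
  and LY: "\<And>a b. a < n \<Longrightarrow> b < n \<Longrightarrow> a \<noteq> b \<Longrightarrow> Ym n a b \<in> real_lie_gen n S"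
  and LD: "\<And>a b. a < n \<Longrightarrow> b < n \<Longrightarrow> a \<noteq> b \<Longrightarrow> Dm n a b \<in> real_lie_gen n S"
  shows "A \<in> real_lie_gen n S"
proof -
  note cA = suD(1)[OF A] and skew = suD(2)[OF A] and tr = suD(3)[OF A]
  define K where "K = (\<lambda>a b z. complex_of_real (Re z) \<cdot>\<^sub>m Xm n a b + complex_of_real (Im z) \<cdot>\<^sub>m Ym n a b)"
  have KL: "K a b z \<in> real_lie_gen n S" if "a < n" "b < n" "a \<noteq> b" for a b z
    unfolding K_def using that by (intro real_lie_gen.add real_lie_gen.smult LX LY)
  have Kc: "K a b z \<in> carrier_mat n n" for a b z unfolding K_def by simp
  have Kidx: "K a b z $$ (r,s) = (if r = a \<and> s = b then z else if r = b \<and> s = a then - cnj z else 0)"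
    if "a \<noteq> b" "r < n" "s < n" for a b z r s
  proof -
    have "K a b z $$ (r,s) = complex_of_real (Re z) * Xm n a b $$ (r,s) + complex_of_real (Im z) * Ym n a b $$ (r,s)"
      using that unfolding K_def by simp
    also have "\<dots> = (if r = a \<and> s = b then z else if r = b \<and> s = a then - cnj z else 0)"
      using that by (cases "r=a"; cases "s=b"; cases "r=b"; cases "s=a") (simp_all add: Xm_index Ym_index complex_eq_iff)
    finally show ?thesis .
  qed
  define P where "P = {(a,b). a < b \<and> b < (n::nat)}"
  have finP: "finite P" by (rule finite_subset[of _ "{..<n} \<times> {..<n}"]) (auto simp: P_def)
  define S1 where "S1 = mat n n (\<lambda>(r,s). \<Sum>t\<in>P. K (fst t) (snd t) (A $$ t) $$ (r,s))"
  have S1L: "S1 \<in> real_lie_gen n S" unfolding S1_def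
    by (rule sum_in_L[OF finP]) (auto simp: P_def intro!: KL Kc)
  define Dg where "Dg = (\<lambda>a. complex_of_real (Im (A $$ (a,a))) \<cdot>\<^sub>m Dm n a (n-1))"
  define S2 where "S2 = mat n n (\<lambda>(r,s). \<Sum>a\<in>{..<n-1}. Dg a $$ (r,s))"
  have S2L: "S2 \<in> real_lie_gen n S" unfolding S2_def
  proof (rule sum_in_L)
    fix a assume "a \<in> {..<n-1}"
    then have "a < n" "n - 1 < n" "a \<noteq> n - 1" using n1 by auto
    then show "Dg a \<in> real_lie_gen n S" unfolding Dg_def by (intro real_lie_gen.smult LD)
  qed (simp_all add: Dg_def)
  have diag: "A $$ (a,a) = \<i> * complex_of_real (Im (A $$ (a,a)))" if "a < n" for a
  proof -
    have "A $$ (a,a) = - cnj (A $$ (a,a))" using skew[OF that that] .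
    then have "Re (A $$ (a,a)) = - Re (A $$ (a,a))" by (metis complex_cnj_minus complex_cnj_cnj cnj.simps(1) uminus_complex.simps(1))
    then have "Re (A $$ (a,a)) = 0" by simp
    then show ?thesis by (simp add: complex_eq_iff)
  qed
  have nsplit: "{..<n} = insert (n-1) {..<n-1}" using n1 by auto
  have last: "A $$ (n-1,n-1) = - (\<i> * complex_of_real (\<Sum>a<n-1. Im (A $$ (a,a))))"
  proof -
    have "0 = (\<Sum>a<n. A $$ (a,a))" using tr cA by (simp add: mtrace_def)
    also have "\<dots> = A $$ (n-1,n-1) + (\<Sum>a<n-1. A $$ (a,a))" unfolding nsplit by simp
    also have "(\<Sum>a<n-1. A $$ (a,a)) = (\<Sum>a<n-1. \<i> * complex_of_real (Im (A $$ (a,a))))"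
      by (rule sum.cong[OF refl]) (use diag in auto)
    also have "\<dots> = \<i> * complex_of_real (\<Sum>a<n-1. Im (A $$ (a,a)))"
      by (simp add: sum_distrib_left)
    finally show ?thesis by (simp add: eq_neg_iff_add_eq_0)
  qed
  have e1: "S1 $$ (r,s) = (if r < s then A $$ (r,s) else if s < r then - cnj (A $$ (s,r)) else 0)"
    if rs: "r < n" "s < n" for r s
  proof -
    have "S1 $$ (r,s) = (\<Sum>t\<in>P. K (fst t) (snd t) (A $$ t) $$ (r,s))" using rs by (simp add: S1_def)
    also have "\<dots> = (\<Sum>t\<in>P. (if t = (r,s) then A $$ (r,s) else 0) + (if t = (s,r) then - cnj (A $$ (s,r)) else 0))"
    proof (rule sum.cong[OF refl])
      fix t assume "t \<in> P"
      then obtain a b where t: "t = (a,b)" "a < b" "b < n" by (auto simp: P_def)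
      have "K (fst t) (snd t) (A $$ t) $$ (r,s) = (if r = a \<and> s = b then A $$ (a,b) else if r = b \<and> s = a then - cnj (A $$ (a,b)) else 0)"
        using t rs by (simp add: Kidx)
      also have "\<dots> = (if t = (r,s) then A $$ (r,s) else 0) + (if t = (s,r) then - cnj (A $$ (s,r)) else 0)"
        using t by (cases "r=a"; cases "s=b"; cases "r=b"; cases "s=a") simp_all
      finally show "K (fst t) (snd t) (A $$ t) $$ (r,s) = (if t = (r,s) then A $$ (r,s) else 0) + (if t = (s,r) then - cnj (A $$ (s,r)) else 0)" .
    qed
    also have "\<dots> = (\<Sum>t\<in>P. if t = (r,s) then A $$ (r,s) else 0) + (\<Sum>t\<in>P. if t = (s,r) then - cnj (A $$ (s,r)) else 0)"
      by (rule sum.distrib)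
    also have "\<dots> = (if (r,s) \<in> P then A $$ (r,s) else 0) + (if (s,r) \<in> P then - cnj (A $$ (s,r)) else 0)"
      using finP by (simp only: sum.delta)
    also have "\<dots> = (if r < s then A $$ (r,s) else if s < r then - cnj (A $$ (s,r)) else 0)"
      using rs by (auto simp: P_def)
    finally show ?thesis .
  qed
  have Dgidx: "Dg a $$ (r,s) = complex_of_real (Im (A $$ (a,a))) * (\<i> * ((if r = a \<and> s = a then 1 else 0) - (if r = n-1 \<and> s = n-1 then 1 else 0)))"
    if "r < n" "s < n" for a r s
    using that by (simp add: Dg_def Dm_index)
  have e2: "S2 $$ (r,s) = (if r = s then (if r < n - 1 then \<i> * complex_of_real (Im (A $$ (r,r))) else - (\<i> * complex_of_real (\<Sum>a<n-1. Im (A $$ (a,a))))) else 0)"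
    if rs: "r < n" "s < n" for r s
  proof -
    have S2i: "S2 $$ (r,s) = (\<Sum>a\<in>{..<n-1}. Dg a $$ (r,s))" using rs by (simp add: S2_def)
    show ?thesis
    proof (cases "r = s")
      case False
      have "(\<Sum>a\<in>{..<n-1}. Dg a $$ (r,s)) = 0"
        by (rule sum.neutral) (use rs False in \<open>simp add: Dgidx\<close>)
      then show ?thesis using S2i False by simp
    next
      case True
      show ?thesis
      proof (cases "r < n - 1")
        case True2: True
        have "(\<Sum>a\<in>{..<n-1}. Dg a $$ (r,s)) = (\<Sum>a\<in>{..<n-1}. if a = r then \<i> * complex_of_real (Im (A $$ (r,r))) else 0)"
        proof (rule sum.cong[OF refl])
          fix a assume "a \<in> {..<n-1}"
          then show "Dg a $$ (r,s) = (if a = r then \<i> * complex_of_real (Im (A $$ (r,r))) else 0)"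
            using rs True True2 by (cases "a = r") (simp_all add: Dgidx)
        qed
        also have "\<dots> = \<i> * complex_of_real (Im (A $$ (r,r)))" using True2 by (simp add: sum.delta')
        finally show ?thesis using S2i True True2 by simp
      next
        case False
        then have rn: "r = n - 1" using rs by linarith
        have "(\<Sum>a\<in>{..<n-1}. Dg a $$ (r,s)) = (\<Sum>a\<in>{..<n-1}. - (\<i> * complex_of_real (Im (A $$ (a,a)))))"
        proof (rule sum.cong[OF refl])
          fix a assume "a \<in> {..<n-1}"
          then have "a \<noteq> r" using rn by auto
          then show "Dg a $$ (r,s) = - (\<i> * complex_of_real (Im (A $$ (a,a))))"
            using rs True rn by (simp add: Dgidx)
        qed
        also have "\<dots> = - (\<i> * complex_of_real (\<Sum>a<n-1. Im (A $$ (a,a))))"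
          by (simp add: sum_negf sum_distrib_left)
        finally show ?thesis using S2i True False by simp
      qed
    qed
  qed
  have "A = S1 + S2"
  proof (rule eq_matI)
    fix r s assume "r < dim_row (S1 + S2)" "s < dim_col (S1 + S2)"
    then have rs: "r < n" "s < n" by (simp_all add: S2_def)
    have "(S1 + S2) $$ (r,s) = S1 $$ (r,s) + S2 $$ (r,s)" using rs by (simp add: S2_def)
    also have "\<dots> = A $$ (r,s)"
    proof (cases "r < s")
      case True then show ?thesis using rs by (simp add: e1 e2)
    next
      case False
      show ?thesis
      proof (cases "s < r")
        case True
        have "A $$ (r,s) = - cnj (A $$ (s,r))" using skew[OF rs(2) rs(1)] .
        then show ?thesis using rs True False by (simp add: e1 e2)
      next
        case False2: False
        then have rs_eq: "s = r" using False by simp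
        show ?thesis
        proof (cases "r < n - 1")
          case True then show ?thesis using rs rs_eq diag[OF rs(1)] by (simp add: e1 e2)
        next
          case False
          then have "r = n - 1" using rs by linarith
          then show ?thesis using rs rs_eq last by (simp add: e1 e2)
        qed
      qed
    qed
    finally show "A $$ (r,s) = (S1 + S2) $$ (r,s)" by simp
  qed (use cA in \<open>simp_all add: S2_def\<close>)
  then show ?thesis using S1L S2L by (simp add: real_lie_gen.add)
qed

theorem lemma6p1:
  fixes n1 n2 j m :: nat
  assumes "n1 \<ge> 1" and "n2 \<ge> 1" and "n1 + n2 \<ge> 3"
    and "j < n1" and "n1 \<le> m" and "m < n1 + n2"
  shows "real_lie_gen (n1 + n2)
           ({block_diag A B | A B. A \<in> su n1 \<and> B \<in> su n2} \<union> {sym_i_mat (n1 + n2) j m})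
         = su (n1 + n2)"
proof -
  have G: "{block_diag A B | A B. A \<in> su n1 \<and> B \<in> su n2} = BD n1 n2" unfolding BD_def ..
  have jm: "j \<noteq> m" "j < n1 + n2" using assms by linarith+
  have sub: "BD n1 n2 \<union> {sym_i_mat (n1+n2) j m} \<subseteq> su (n1+n2)"
  proof
    fix X assume "X \<in> BD n1 n2 \<union> {sym_i_mat (n1+n2) j m}"
    then show "X \<in> su (n1+n2)"
    proof
      assume "X \<in> BD n1 n2" then show ?thesis unfolding BD_def using block_diag_su by blast
    next
      assume "X \<in> {sym_i_mat (n1+n2) j m}"
      then show ?thesis using sym_i_su[OF jm(1) jm(2) assms(6)] by simp
    qed
  qed
  show ?thesis unfolding G
  proof
    show "real_lie_gen (n1 + n2) (BD n1 n2 \<union> {sym_i_mat (n1 + n2) j m}) \<subseteq> su (n1 + n2)"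
      using L_su sub by blast
    show "su (n1 + n2) \<subseteq> real_lie_gen (n1 + n2) (BD n1 n2 \<union> {sym_i_mat (n1 + n2) j m})"
    proof
      fix A assume A: "A \<in> su (n1 + n2)"
      show "A \<in> real_lie_gen (n1 + n2) (BD n1 n2 \<union> {sym_i_mat (n1 + n2) j m})"
      proof (rule decomp[OF _ A])
        show "1 \<le> n1 + n2" using assms(1) by simp
        fix a b assume ab: "a < n1 + n2" "b < n1 + n2" "a \<noteq> b"
        show "Xm (n1 + n2) a b \<in> real_lie_gen (n1 + n2) (BD n1 n2 \<union> {sym_i_mat (n1 + n2) j m})"
          by (rule main_X[OF assms(4,5,6,3) ab])
        show "Ym (n1 + n2) a b \<in> real_lie_gen (n1 + n2) (BD n1 n2 \<union> {sym_i_mat (n1 + n2) j m})"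
          by (rule main_Y[OF assms(4,5,6) ab])
        show "Dm (n1 + n2) a b \<in> real_lie_gen (n1 + n2) (BD n1 n2 \<union> {sym_i_mat (n1 + n2) j m})"
          by (rule main_D[OF assms(4,5,6,3) ab])
      qed
    qed
  qed
qed
end
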